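(* For all $q\in Q$, $p''(q)$ and $r''(\overline p(q))$ have the same sign.
   Context: Let $0<q_\ell<q_h<\infty$, $Q=[q_\ell,q_h]$, and let $c$ be a real number with $0<c<q_\ell$. Let $F$ be a probability distribution on $[0,1]$ with support $[0,1]$ admitting a twice continuously differentiable density $f:(0,1)\to\mathbb{R}_{>0}$. Define $r(v)=(1-F(v))/f(v)$ and $\psi(v)=v-r(v)$ on $(0,1)$, and assume $\psi'(v)>0$ whenever $\psi(v)>0$. For $q\in Q$, $p(q)$ is the unique maximizer over $p\in\mathbb{R}$ of $(p-c)\big(1-F(p/q)\big)$, and $\overline p(q)=p(q)/q$. *)

theory Defs
  imports "HOL-Analysis.Analysis"
begin

definition hazr :: "(real \<Rightarrow> real) \<Rightarrow> (real \<Rightarrow> real) \<Rightarrow> real \<Rightarrow> real" where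
  "hazr F f v = (1 - F v) / f v"

definition virt :: "(real \<Rightarrow> real) \<Rightarrow> (real \<Rightarrow> real) \<Rightarrow> real \<Rightarrow> real" where
  "virt F f v = v - hazr F f v"

definition profit :: "(real \<Rightarrow> real) \<Rightarrow> real \<Rightarrow> real \<Rightarrow> real \<Rightarrow> real" where
  "profit F c q p = (p - c) * (1 - F (p / q))"

definition opt_price :: "(real \<Rightarrow> real) \<Rightarrow> real \<Rightarrow> real \<Rightarrow> real" where
  "opt_price F c q = (THE p. \<forall>p'. profit F c q p' \<le> profit F c q p)"

definition opt_price_bar :: "(real \<Rightarrow> real) \<Rightarrow> real \<Rightarrow> real \<Rightarrow> real" where
  "opt_price_bar F c q = opt_price F c q / q"

end

theory Submission
  imports Defs
begin

theorem lemma9: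
  fixes F f :: "real \<Rightarrow> real" and c q_l q_h :: real
  assumes "0 < q_l" and "q_l < q_h" and "0 < c" and "c < q_l"
    and F_low: "\<forall>v\<le>0. F v = 0" and F_high: "\<forall>v\<ge>1. F v = 1"
    and F_cont: "continuous_on UNIV F"
    and F_dens: "\<forall>v\<in>{0<..<1}. (F has_real_derivative f v) (at v)"
    and f_pos: "\<forall>v\<in>{0<..<1}. f v > 0"
    and f_C2: "\<forall>v\<in>{0<..<1}. f differentiable (at v) \<and> deriv f differentiable (at v)"
    and f_C2_cont: "continuous_on {0<..<1} (deriv (deriv f))"
    and psi_mono: "\<forall>v\<in>{0<..<1}. virt F f v > 0 \<longrightarrow> deriv (virt F f) v > 0"
    and q: "q \<in> {q_l..q_h}"
  shows "sgn (deriv (deriv (opt_price F c)) q)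
         = sgn (deriv (deriv (hazr F f)) (opt_price_bar F c q))"
proof -
  define r where "r = hazr F f"
  define psi where "psi = virt F f"
  define f1 where "f1 = deriv f"
  define R1 where "R1 = (\<lambda>v. (- (f v * f v) - (1 - F v) * f1 v) / (f v)^2)"
  define R2 where "R2 = deriv R1"
  have r_fun: "r = (\<lambda>v. (1 - F v) / f v)" by (simp add: r_def hazr_def fun_eq_iff)
  have psi_fun: "psi = (\<lambda>v. v - r v)" by (simp add: psi_def virt_def r_def fun_eq_iff)
  have Fd: "(F has_real_derivative f v) (at v)" if "0<v" "v<1" for v using F_dens that by auto
  have fpos: "f v > 0" if "0<v" "v<1" for v using f_pos that by auto
  have fd: "(f has_real_derivative f1 v) (at v)" if "0<v" "v<1" for v
    using f_C2 that unfolding f1_def by (auto simp: DERIV_deriv_iff_real_differentiable)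
  have f1d: "f1 differentiable (at v)" if "0<v" "v<1" for v using f_C2 that unfolding f1_def by auto
  have Fdiff: "F differentiable (at v)" if "0<v" "v<1" for v
    using Fd[OF that] real_differentiable_def by blast
  have fdiff: "f differentiable (at v)" if "0<v" "v<1" for v
    using fd[OF that] real_differentiable_def by blast
  have rd: "(r has_real_derivative R1 v) (at v)" if "0<v" "v<1" for v
    unfolding r_fun R1_def using Fd[OF that] fd[OF that] fpos[OF that]
    by (auto intro!: derivative_eq_intros simp: power2_eq_square)
  have R1d: "(R1 has_real_derivative R2 v) (at v)" if "0<v" "v<1" for v
  proof -
    have "R1 differentiable (at v)"
      unfolding R1_def using Fdiff[OF that] fdiff[OF that] f1d[OF that] fpos[OF that]
      by (auto intro!: derivative_intros)
    then show ?thesis unfolding R2_def by (simp add: DERIV_deriv_iff_real_differentiable)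
  qed
  have psid: "(psi has_real_derivative 1 - R1 v) (at v)" if "0<v" "v<1" for v
    unfolding psi_fun using rd[OF that] by (auto intro!: derivative_eq_intros)
  have ev01: "eventually (\<lambda>x. x \<in> {0<..<1}) (nhds v)" if "0<v" "v<1" for v :: real
    using that by (intro eventually_nhds_in_open) auto
  have deriv_r: "deriv r v = R1 v" if "0<v" "v<1" for v using rd[OF that] by (rule DERIV_imp_deriv)
  have deriv2_r: "deriv (deriv r) v = R2 v" if "0<v" "v<1" for v
  proof -
    have "deriv (deriv r) v = deriv R1 v"
      by (rule deriv_cong_ev) (auto intro!: eventually_mono[OF ev01[OF that]] deriv_r)
    then show ?thesis by (simp add: R2_def)
  qed
  have psi_pos_R1: "1 - R1 v > 0" if "0<v" "v<1" "psi v > 0" for v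
    using psi_mono that DERIV_imp_deriv[OF psid[OF that(1,2)]] unfolding psi_def by auto
  have F_lt1: "F v < 1" if v1: "v < 1" for v
  proof (cases "v \<le> 0")
    case True then show ?thesis using F_low by auto
  next
    case False
    have "continuous_on {v..1} F" using F_cont continuous_on_subset by blast
    moreover have "\<And>x. v < x \<Longrightarrow> x < 1 \<Longrightarrow> F differentiable (at x)"
      using Fdiff False by auto
    ultimately obtain l z where z: "v < z" "z < 1" "DERIV F z :> l" "F 1 - F v = (1 - v) * l"
      using MVT[OF v1] by blast
    have "l = f z" using DERIV_unique[OF z(3) Fd] z False by auto
    then have "l > 0" using fpos z False by auto
    moreover have "(1 - v) * l > 0" using v1 \<open>l > 0\<close> by simp
    moreover have "F 1 = 1" using F_high by simp
    ultimately show ?thesis using z(4) by linarith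
  qed
  have F_le1: "F v \<le> 1" for v using F_lt1 F_high by (cases "v < 1") (auto simp: not_less less_imp_le)
  have r_pos: "r v > 0" if "0<v" "v<1" for v
    using F_lt1[OF that(2)] fpos[OF that] unfolding r_fun by simp
  have psi_lt: "psi v < v" if "0<v" "v<1" for v using r_pos[OF that] psi_fun by simp
  have psi_cont: "isCont psi v" if "0<v" "v<1" for v using psid[OF that] DERIV_isCont by blast
  have psi_inc: "psi v1 < psi v2" if hv: "0<v1" "v1<v2" "v2<1" "psi v1 > 0" for v1 v2
  proof (rule ccontr)
    assume nc: "\<not> psi v1 < psi v2"
    have "continuous_on {v1..v2} psi"
      using psi_cont hv by (intro continuous_at_imp_continuous_on) auto
    then obtain m where m: "m \<in> {v1..v2}" "\<forall>y\<in>{v1..v2}. psi y \<le> psi m"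
      using continuous_attains_sup[of "{v1..v2}" psi] hv by auto
    have D1: "1 - R1 v1 > 0" using psi_pos_R1 hv by auto
    obtain d where d: "d > 0" "\<forall>h>0. h < d \<longrightarrow> psi v1 < psi (v1 + h)"
      using DERIV_pos_inc_right[OF psid D1] hv by auto
    define h where "h = min (d/2) (v2 - v1)"
    have "psi v1 < psi (v1 + h)" using d hv unfolding h_def by auto
    moreover have "psi (v1 + h) \<le> psi m" using m hv d unfolding h_def by auto
    ultimately have gt: "psi m > psi v1" by simp
    then have mne: "m \<noteq> v1" "m \<noteq> v2" using nc by auto
    then have mi: "v1 < m" "m < v2" using m by auto
    have "1 - R1 m = 0"
    proof (rule DERIV_local_max[OF psid[of m]])
      show "0 < min (m - v1) (v2 - m)" using mi by simp
      show "\<forall>y. \<bar>m - y\<bar> < min (m - v1) (v2 - m) \<longrightarrow> psi y \<le> psi m"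
        using m(2) by (auto simp: abs_if split: if_splits)
    qed (use mi hv in auto)
    moreover have "1 - R1 m > 0" using psi_pos_R1[of m] mi hv gt by auto
    ultimately show False by simp
  qed
  have psi_inj: "v1 = v2" if "0<v1" "v1<1" "0<v2" "v2<1" "psi v1 = psi v2" "psi v1 > 0" for v1 v2
    using psi_inc[of v1 v2] psi_inc[of v2 v1] that by (cases v1 v2 rule: linorder_cases) auto
  have opt: "0 < opt_price F c q / q \<and> opt_price F c q / q < 1 \<and> psi (opt_price F c q / q) = c / q"
    if cq: "c < q" for q
  proof -
    have qpos: "q > 0" using \<open>0<c\<close> cq by simp
    define P where "P = profit F c q"
    have P_fun: "P = (\<lambda>p. (p - c) * (1 - F (p/q)))" by (simp add: P_def profit_def fun_eq_iff)
    have Fq_cont: "continuous_on UNIV (\<lambda>p. F (p/q))"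
      by (rule continuous_on_compose2[OF F_cont]) (use qpos in \<open>auto intro!: continuous_intros\<close>)
    have "continuous_on UNIV P" unfolding P_fun by (intro continuous_intros Fq_cont)
    then have Pcont: "continuous_on {c..q} P" using continuous_on_subset by blast
    obtain p0 where p0: "p0 \<in> {c..q}" "\<forall>y\<in>{c..q}. P y \<le> P p0"
      using continuous_attains_sup[of "{c..q}" P] Pcont cq by auto
    have "(c+q)/2/q < 1" using qpos cq by (simp add: field_simps)
    then have "F ((c+q)/2/q) < 1" by (rule F_lt1)
    then have pm: "P ((c+q)/2) > 0" unfolding P_fun using cq by (simp add: mult_pos_pos)
    have "(c+q)/2 \<in> {c..q}" using cq by simp
    then have Ppos: "P p0 > 0" using p0(2) pm by fastforce
    have Pnp: "P p \<le> 0" if "p \<le> c \<or> q \<le> p" for p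
    proof (cases "p \<le> c")
      case True
      then show ?thesis unfolding P_fun using F_le1[of "p/q"] by (simp add: mult_nonpos_nonneg)
    next
      case False
      then have "q \<le> p" using that by simp
      then have "p / q \<ge> 1" using qpos by simp
      then show ?thesis unfolding P_fun using F_high by simp
    qed
    have Pglob: "\<forall>p. P p \<le> P p0"
    proof
      fix p show "P p \<le> P p0"
      proof (cases "p \<le> c \<or> q \<le> p")
        case True then show ?thesis using Pnp[OF True] Ppos by simp
      next
        case False then show ?thesis using p0(2) by auto
      qed
    qed
    have key: "c < p \<and> p < q \<and> psi (p/q) = c/q" if pg: "\<forall>p'. P p' \<le> P p" and pp: "P p > 0" for p
    proof -
      have pi: "c < p" "p < q" using Pnp[of p] pp by force+
      define v where "v = p / q"
      have v01: "0 < v" "v < 1" unfolding v_def using pi qpos \<open>0<c\<close> by (auto simp: field_simps)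
      have dq: "((\<lambda>p. p / q) has_real_derivative 1 / q) (at p)" using qpos by (auto intro!: derivative_eq_intros)
      have Fq: "((\<lambda>p. F (p/q)) has_real_derivative f v * (1 / q)) (at p)"
      proof -
        have "(F has_real_derivative f (p/q)) (at ((\<lambda>p. p / q) p))" using Fd v01 v_def by simp
        from DERIV_chain2[OF this dq] show ?thesis unfolding v_def by simp
      qed
      have PD: "(P has_real_derivative (1 - F v) - (p - c) * (f v * (1 / q))) (at p)"
        unfolding P_fun using Fq unfolding v_def by (auto intro!: derivative_eq_intros)
      have "(1 - F v) - (p - c) * (f v * (1 / q)) = 0"
        by (rule DERIV_local_max[OF PD, of 1]) (use pg in auto)
      then have "(1 - F v) / f v = (p - c) / q" using fpos[OF v01] qpos by (simp add: field_simps)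
      then have "psi v = v - (p - c) / q" unfolding psi_fun r_fun by simp
      also have "\<dots> = c / q" unfolding v_def using qpos by (simp add: field_simps)
      finally show ?thesis using pi v_def by simp
    qed
    have the: "opt_price F c q = p0" unfolding opt_price_def
    proof (rule the_equality)
      show "\<forall>p'. profit F c q p' \<le> profit F c q p0" using Pglob P_def by simp
    next
      fix p assume "\<forall>p'. profit F c q p' \<le> profit F c q p"
      then have pg: "\<forall>p'. P p' \<le> P p" using P_def by simp
      then have "P p > 0" using Ppos by (meson less_le_trans)
      from key[OF pg this] key[OF Pglob Ppos]
      have k: "c < p" "p < q" "psi (p/q) = c/q" "c < p0" "p0 < q" "psi (p0/q) = c/q" by auto
      have "c / q > 0" using qpos \<open>0<c\<close> by simp
      moreover have "0 < p/q" "p/q < 1" "0 < p0/q" "p0/q < 1" using k qpos \<open>0<c\<close> by auto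
      ultimately have "p / q = p0 / q"
        using psi_inj[of "p/q" "p0/q"] k by auto
      then show "p = p0" using qpos by simp
    qed
    show ?thesis using key[OF Pglob Ppos] qpos \<open>0<c\<close> unfolding the by (auto simp: field_simps)
  qed
  define W where "W = (\<lambda>y. opt_price F c (c/y) / (c/y))"
  have W_props: "0 < W y \<and> W y < 1 \<and> psi (W y) = y" if "0<y" "y<1" for y
  proof -
    have "c < c / y" using that \<open>0<c\<close> by (simp add: field_simps)
    from opt[OF this] show ?thesis unfolding W_def using that \<open>0<c\<close> by simp
  qed
  have W_psi: "W (psi z) = z" if "0<z" "z<1" "psi z > 0" for z
  proof -
    have y: "0 < psi z" "psi z < 1" using that psi_lt[of z] by auto
    from W_props[OF y] show ?thesis using psi_inj[of "W (psi z)" z] that by auto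
  qed
  have opt_eq: "opt_price F c q = q * W (c/q)" if "q > 0" for q
    unfolding W_def using that \<open>0<c\<close> by simp
  have W_cont: "isCont W y" if y0: "0<y" "y<1" for y
  proof -
    define x where "x = W y"
    have x: "0 < x" "x < 1" "psi x = y" using W_props[OF y0] x_def by auto
    obtain e where e: "e > 0" "\<forall>z. z \<noteq> x \<and> \<bar>x - z\<bar> < e \<longrightarrow> 0 < psi z"
      using LIM_fun_gt_zero[OF psi_cont[OF x(1,2), unfolded isCont_def]] x y0 by auto
    define d where "d = min (e/2) (min (x/2) ((1-x)/2))"
    have d: "d > 0" using e x by (simp add: d_def)
    have zin: "0 < z \<and> z < 1 \<and> psi z > 0" if "\<bar>z - x\<bar> \<le> d" for z
    proof -
      have "0 < z" "z < 1" "\<bar>x - z\<bar> < e" using that e x unfolding d_def by (auto simp: abs_if split: if_splits)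
      then show ?thesis using e x y0 by (cases "z = x") auto
    qed
    have "isCont W (psi x)"
      by (rule isCont_inverse_function[OF d]) (use zin W_psi psi_cont in auto)
    then show ?thesis using x by simp
  qed
  define D where "D = (\<lambda>u. 1 - R1 (W u))"
  have Dpos: "D u > 0" if "0<u" "u<1" for u
    using psi_pos_R1[of "W u"] W_props[OF that] that unfolding D_def by auto
  have W_der: "(W has_real_derivative inverse (D y)) (at y)" if "0<y" "y<1" for y
  proof (rule DERIV_inverse_function[where f=psi and g=W and a=0 and b=1])
    show "(psi has_real_derivative D y) (at (W y))" unfolding D_def using psid W_props[OF that] by auto
    show "D y \<noteq> 0" using Dpos[OF that] by simp
  qed (use that W_props W_cont in auto)
  define G where "G = (\<lambda>u. W u - u / D u)"
  define G' where "G' = (\<lambda>u. inverse (D u) - (1 * D u - u * (0 - R2 (W u) * inverse (D u))) / (D u * D u))"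
  have Gd: "(G has_real_derivative G' u) (at u)" if "0<u" "u<1" for u
  proof -
    have "(R1 has_real_derivative R2 (W u)) (at (W u))" using R1d W_props[OF that] by auto
    from DERIV_chain2[OF this W_der[OF that]]
    have "((\<lambda>x. R1 (W x)) has_real_derivative R2 (W u) * inverse (D u)) (at u)" .
    from DERIV_diff[OF DERIV_const this]
    have Dd: "(D has_real_derivative 0 - R2 (W u) * inverse (D u)) (at u)" unfolding D_def .
    have "((\<lambda>x. x / D x) has_real_derivative (1 * D u - u * (0 - R2 (W u) * inverse (D u))) / (D u * D u)) (at u)"
      by (rule DERIV_divide[OF DERIV_ident Dd]) (use Dpos[OF that] in simp)
    from DERIV_diff[OF W_der[OF that] this] show ?thesis unfolding G_def G'_def .
  qed
  have dcq: "((\<lambda>q. c / q) has_real_derivative - c / q^2) (at q)" if "q > 0" for q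
    using that by (auto intro!: derivative_eq_intros simp: power2_eq_square field_simps)
  have u01: "0 < c / q \<and> c / q < 1" if "c < q" for q using that \<open>0<c\<close> by (simp add: field_simps)
  have Pd: "(opt_price F c has_real_derivative G (c/q)) (at q)" if cq: "c < q" for q
  proof -
    have qpos: "q > 0" using cq \<open>0<c\<close> by simp
    have u: "0 < c/q" "c/q < 1" using u01[OF cq] by auto
    from DERIV_chain2[OF W_der[OF u] dcq[OF qpos]]
    have "((\<lambda>q. W (c / q)) has_real_derivative inverse (D (c/q)) * (- c / q^2)) (at q)" .
    from DERIV_mult[OF DERIV_ident this]
    have "((\<lambda>q. q * W (c / q)) has_real_derivative 1 * W (c/q) + inverse (D (c/q)) * (- c / q^2) * q) (at q)" .
    moreover have "1 * W (c/q) + inverse (D (c/q)) * (- c / q^2) * q = G (c/q)"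
      unfolding G_def using Dpos[OF u] qpos by (simp add: field_simps power2_eq_square)
    moreover have "eventually (\<lambda>x. x * W (c / x) = opt_price F c x) (nhds q)"
    proof -
      have "eventually (\<lambda>x. x \<in> {0<..}) (nhds q)" using qpos by (intro eventually_nhds_in_open) auto
      then show ?thesis by eventually_elim (simp add: opt_eq)
    qed
    ultimately show ?thesis using DERIV_cong_ev by fastforce
  qed
  have qc: "c < q" using q \<open>c < q_l\<close> by auto
  have qpos: "q > 0" using qc \<open>0<c\<close> by simp
  define u where "u = c / q"
  have u: "0 < u" "u < 1" using u01[OF qc] u_def by auto
  have dP: "deriv (opt_price F c) x = G (c/x)" if "c < x" for x using Pd[OF that] by (rule DERIV_imp_deriv)
  have "eventually (\<lambda>x. x \<in> {c<..}) (nhds q)" using qc by (intro eventually_nhds_in_open) auto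
  then have "deriv (deriv (opt_price F c)) q = deriv (\<lambda>x. G (c/x)) q"
    by (intro deriv_cong_ev) (auto elim!: eventually_mono simp: dP)
  also have "\<dots> = G' u * (- c / q^2)"
  proof (rule DERIV_imp_deriv)
    have "(G has_real_derivative G' u) (at ((\<lambda>x. c / x) q))" using Gd u u_def by simp
    from DERIV_chain2[OF this dcq[OF qpos]] show "((\<lambda>x. G (c/x)) has_real_derivative G' u * (- c / q^2)) (at q)"
      unfolding u_def by simp
  qed
  also have "\<dots> = (u * c / q^2 / (D u)^3) * R2 (W u)"
    unfolding G'_def using Dpos[OF u] qpos by (simp add: field_simps power2_eq_square power3_eq_cube)
  finally have L: "deriv (deriv (opt_price F c)) q = (u * c / q^2 / (D u)^3) * R2 (W u)" .
  have "opt_price_bar F c q = W u" unfolding opt_price_bar_def u_def using opt_eq[OF qpos] qpos by simp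
  then have R: "deriv (deriv (hazr F f)) (opt_price_bar F c q) = R2 (W u)"
    using deriv2_r[of "W u"] W_props[OF u] unfolding r_def by simp
  have k: "u * c / q^2 / (D u)^3 > 0" using u qpos Dpos[OF u] \<open>0<c\<close> by simp
  have "sgn (u * c / q^2 / (D u)^3) = 1" using k by (simp only: sgn_pos)
  then show ?thesis unfolding L R sgn_mult by simp
qed

end
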